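(* Let $\Omega$ be a planar triangle mesh with vertices $w_1,\dots,w_n\in\mathbb{C}$ and face set $\mathcal{F}$, and let $\mu$ be a piecewise constant Beltrami coefficient on $\Omega$, i.e. $\mu|_T=\mu_T=\rho_T+i\tau_T\in\mathbb{C}$ with $|\mu_T|<1$ for every face $T\in\mathcal{F}$. For $u,v\in\mathbb{R}^n$ define the discrete least-squares quasi-conformal energy $$E_{QC}^{\mu}(u,v)=\frac12\sum_{T\in\mathcal{F}}\operatorname{Area}(T)\,\big\|P_T\nabla u|_T+JP_T\nabla v|_T\big\|^2 .$$ Then the solution of the equation $E_{QC}^{\mu}(u,v)=0$ is unique up to scaling, rotation and translation: there exists $f_0\in\mathbb{C}^n$ such that, identifying $(u,v)$ with $f=u+iv\in\mathbb{C}^n$ (where $f_j=u_j+iv_j$ is the image of $w_j$), the set of all solutions is exactly $\{a f_0+b\mathbf{1}: a,b\in\mathbb{C}\}$, where $\mathbf{1}=(1,\dots,1)^T$.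
   Context: The mesh $\Omega$ is a connected triangulated planar domain whose faces are nondegenerate, consistently (positively) oriented triangles. A vector $u\in\mathbb{R}^n$ is identified with the continuous function on $\Omega$ that is linear on each face and takes value $u_j$ at $w_j$; on a face $T$ this function has constant gradient $\nabla u|_T\in\mathbb{R}^2$ (explicitly, if $T=[w_0^T,w_1^T,w_2^T]$ with values $u_0,u_1,u_2$, then $\nabla u|_T=\frac{1}{2\operatorname{Area}(T)}\begin{pmatrix}0&-1\\1&0\end{pmatrix}\sum_{i=0}^2u_i(w^T_{i+2}-w^T_{i+1})$ with indices mod 3 and points of $\mathbb{C}$ viewed as vectors in $\mathbb{R}^2$); similarly for $v$. On each face, $$P_T=\frac{1}{\sqrt{1-|\mu_T|^2}}\begin{pmatrix}1-\rho_T&-\tau_T\\-\tau_T&1+\rho_T\end{pmatrix},\qquad J=\begin{pmatrix}0&-1\\1&0\end{pmatrix}.$$ Vanishing of this energy is the discrete form of the Beltrami equation $f_{\bar z}=\mu f_z$ for the piecewise linear map $f=u+iv$. *)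

theory Defs
  imports "HOL-Analysis.Analysis"
begin

text \<open>Vertices are the elements of a finite type 'n (so vectors in C^n are functions
 'n \<Rightarrow> complex); a face is an ordered triple of vertices [w0,w1,w2].\<close>

type_synonym 'n face = "'n \<times> 'n \<times> 'n"

definition face_verts :: "'n face \<Rightarrow> 'n set" where
  "face_verts T = (case T of (i, j, k) \<Rightarrow> {i, j, k})"

definition tri_area :: "('n \<Rightarrow> complex) \<Rightarrow> 'n face \<Rightarrow> real" where
  "tri_area w T = (case T of (i, j, k) \<Rightarrow> Im (cnj (w j - w i) * (w k - w i)) / 2)"

text \<open>Gradient of the piecewise linear interpolant of u on face T:
  (1/(2 Area T)) J (sum u_i (w_{i+2} - w_{i+1})), a vector in R^2 as a pair.\<close>
definition pl_grad :: "('n \<Rightarrow> complex) \<Rightarrow> 'n face \<Rightarrow> ('n \<Rightarrow> real) \<Rightarrow> real \<times> real" where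
  "pl_grad w T u = (case T of (i, j, k) \<Rightarrow>
     (let S = complex_of_real (u i) * (w k - w j) + complex_of_real (u j) * (w i - w k)
              + complex_of_real (u k) * (w j - w i);
          A = tri_area w T
      in (- Im S / (2 * A), Re S / (2 * A))))"

definition Jrot :: "real \<times> real \<Rightarrow> real \<times> real" where
  "Jrot p = (- snd p, fst p)"

definition Pmat :: "complex \<Rightarrow> real \<times> real \<Rightarrow> real \<times> real" where
  "Pmat m p = (let \<rho> = Re m; \<tau> = Im m; c = 1 / sqrt (1 - (cmod m)^2)
               in (c * ((1 - \<rho>) * fst p - \<tau> * snd p), c * (- \<tau> * fst p + (1 + \<rho>) * snd p)))"

definition sqnorm2 :: "real \<times> real \<Rightarrow> real" where
  "sqnorm2 p = (fst p)^2 + (snd p)^2"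

definition E_QC :: "('n \<Rightarrow> complex) \<Rightarrow> 'n face set \<Rightarrow> ('n face \<Rightarrow> complex)
                    \<Rightarrow> ('n \<Rightarrow> real) \<Rightarrow> ('n \<Rightarrow> real) \<Rightarrow> real" where
  "E_QC w F mu u v = 1/2 * (\<Sum>T\<in>F. tri_area w T *
       sqnorm2 (Pmat (mu T) (pl_grad w T u) + Jrot (Pmat (mu T) (pl_grad w T v))))"

definition face_adj :: "'n face \<Rightarrow> 'n face \<Rightarrow> bool" where
  "face_adj T T' \<longleftrightarrow> card (face_verts T \<inter> face_verts T') \<ge> 2"

definition planar_mesh :: "('n::finite \<Rightarrow> complex) \<Rightarrow> 'n face set \<Rightarrow> bool" where
  "planar_mesh w F \<longleftrightarrow>
     inj w \<and>
     (\<forall>T\<in>F. tri_area w T > 0) \<and>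
     (\<forall>T\<in>F. \<forall>T'\<in>F. T \<noteq> T' \<longrightarrow>
        interior (convex hull (w ` face_verts T)) \<inter> interior (convex hull (w ` face_verts T')) = {}) \<and>
     (\<forall>x. \<exists>T\<in>F. x \<in> face_verts T) \<and>
     (\<forall>T\<in>F. \<forall>T'\<in>F. (T, T') \<in> {(A, B). A \<in> F \<and> B \<in> F \<and> face_adj A B}\<^sup>*)"

end

theory Submission
  imports Defs
begin

definition LT :: "('n \<Rightarrow> complex) \<Rightarrow> complex \<Rightarrow> 'n face \<Rightarrow> ('n \<Rightarrow> complex) \<Rightarrow> complex" where
 "LT w m T f = (case T of (i,j,k) \<Rightarrow>
    f i * ((w k - w j) + m * cnj (w k - w j)) + f j * ((w i - w k) + m * cnj (w i - w k))
  + f k * ((w j - w i) + m * cnj (w j - w i)))"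

lemma comp:
  fixes f :: "'n \<Rightarrow> complex" and m :: complex
  defines "c \<equiv> 1 / sqrt (1 - (cmod m)^2)"
  assumes A: "tri_area w (i,j,k) \<noteq> 0"
  shows "Pmat m (pl_grad w (i,j,k) (\<lambda>x. Re (f x))) + Jrot (Pmat m (pl_grad w (i,j,k) (\<lambda>x. Im (f x))))
     = (- c * Im (LT w m (i,j,k) f) / (2 * tri_area w (i,j,k)), c * Re (LT w m (i,j,k) f) / (2 * tri_area w (i,j,k)))"
  using A unfolding c_def
  by (simp add: pl_grad_def Pmat_def Jrot_def Let_def LT_def field_simps algebra_simps)

lemma term_zero:
  fixes f :: "'n \<Rightarrow> complex" and m :: complex
  assumes A: "tri_area w T > 0" and M: "cmod m < 1"
  shows "tri_area w T * sqnorm2 (Pmat m (pl_grad w T (\<lambda>x. Re (f x))) + Jrot (Pmat m (pl_grad w T (\<lambda>x. Im (f x))))) = 0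
     \<longleftrightarrow> LT w m T f = 0"
proof -
  obtain i j k where T: "T = (i,j,k)" by (cases T) auto
  define c where "c = 1 / sqrt (1 - (cmod m)^2)"
  define a where "a = tri_area w T"
  have "(cmod m)^2 < 1" using M by (simp add: power_less_one_iff abs_square_less_1)
  then have c: "c > 0" unfolding c_def by simp
  have a: "a > 0" using A a_def by simp
  have "tri_area w T * sqnorm2 (Pmat m (pl_grad w T (\<lambda>x. Re (f x))) + Jrot (Pmat m (pl_grad w T (\<lambda>x. Im (f x)))))
     = a * ((c * Im (LT w m T f) / (2 * a))^2 + (c * Re (LT w m T f) / (2 * a))^2)"
    using comp[of w i j k m f] A unfolding T a_def c_def sqnorm2_def by (simp add: power2_eq_square)
  also have "\<dots> = 0 \<longleftrightarrow> Im (LT w m T f) = 0 \<and> Re (LT w m T f) = 0"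
    using a c by (simp add: add_nonneg_eq_0_iff)
  also have "\<dots> \<longleftrightarrow> LT w m T f = 0" by (auto simp: complex_eq_iff)
  finally show ?thesis .
qed

lemma E_zero:
  fixes w :: "'n::finite \<Rightarrow> complex"
  assumes A: "\<forall>T\<in>F. tri_area w T > 0" and M: "\<forall>T\<in>F. cmod (mu T) < 1"
  shows "E_QC w F mu (\<lambda>j. Re (f j)) (\<lambda>j. Im (f j)) = 0 \<longleftrightarrow> (\<forall>T\<in>F. LT w (mu T) T f = 0)"
proof -
  have fin: "finite F" by simp
  define G where "G = (\<lambda>T. tri_area w T * sqnorm2 (Pmat (mu T) (pl_grad w T (\<lambda>x. Re (f x))) + Jrot (Pmat (mu T) (pl_grad w T (\<lambda>x. Im (f x))))))"
  have nn: "\<And>T. T \<in> F \<Longrightarrow> 0 \<le> G T"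
    using A unfolding G_def by (auto simp: sqnorm2_def less_imp_le)
  have "E_QC w F mu (\<lambda>j. Re (f j)) (\<lambda>j. Im (f j)) = 1/2 * sum G F"
    unfolding E_QC_def G_def by simp
  then have E: "E_QC w F mu (\<lambda>j. Re (f j)) (\<lambda>j. Im (f j)) = 0 \<longleftrightarrow> sum G F = 0" by (intro iffI; linarith)
  have S: "sum G F = 0 \<longleftrightarrow> (\<forall>T\<in>F. G T = 0)" using sum_nonneg_eq_0_iff[OF fin, of G] nn by blast
  from E S have "E_QC w F mu (\<lambda>j. Re (f j)) (\<lambda>j. Im (f j)) = 0 \<longleftrightarrow> (\<forall>T\<in>F. G T = 0)" by simp
  also have "\<dots> \<longleftrightarrow> (\<forall>T\<in>F. LT w (mu T) T f = 0)"
    unfolding G_def using term_zero A M by blast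
  finally show ?thesis .
qed

lemma LT_lin: "LT w m T (\<lambda>x. a * f x + b * g x + c) = a * LT w m T f + b * LT w m T g"
  by (cases T) (simp add: LT_def algebra_simps)

lemma LT_const: "LT w m T (\<lambda>x. c) = 0"
  by (cases T) (simp add: LT_def algebra_simps)

lemma nz: assumes "D \<noteq> 0" "cmod m < 1" shows "D + m * cnj D \<noteq> 0"
proof
  assume "D + m * cnj D = 0"
  then have "D = - (m * cnj D)" by (simp add: add_eq_0_iff)
  then have "cmod D = cmod m * cmod D" by (metis complex_mod_cnj norm_minus_cancel norm_mult)
  with assms show False by simp
qed

lemma area_distinct:
  assumes "tri_area w (i,j,k) > 0"
  shows "w i \<noteq> w j" "w j \<noteq> w k" "w k \<noteq> w i"
proof -
  show "w i \<noteq> w j" using assms by (auto simp: tri_area_def)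
  show "w k \<noteq> w i" using assms by (auto simp: tri_area_def)
  show "w j \<noteq> w k"
  proof
    assume "w j = w k"
    have "cnj (w k - w i) * (w k - w i) = complex_of_real ((cmod (w k - w i))^2)"
      by (metis complex_norm_square mult.commute)
    then have "Im (cnj (w j - w i) * (w k - w i)) = 0"
      using \<open>w j = w k\<close> by simp
    then show False using assms by (simp add: tri_area_def)
  qed
qed

lemma two_zero:
  assumes A: "tri_area w (i,j,k) > 0" and M: "cmod m < 1" and L: "LT w m (i,j,k) f = 0"
    and two: "(f i = 0 \<and> f j = 0) \<or> (f j = 0 \<and> f k = 0) \<or> (f i = 0 \<and> f k = 0)"
  shows "f i = 0 \<and> f j = 0 \<and> f k = 0"
proof -
  note d = area_distinct[OF A]
  have n1: "(w k - w j) + m * cnj (w k - w j) \<noteq> 0" using d M by (intro nz) auto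
  have n2: "(w i - w k) + m * cnj (w i - w k) \<noteq> 0" using d M by (intro nz) auto
  have n3: "(w j - w i) + m * cnj (w j - w i) \<noteq> 0" using d M by (intro nz) auto
  show ?thesis using two L n1 n2 n3 by (auto simp: LT_def)
qed

lemma adj_zero:
  assumes A: "tri_area w (i,j,k) > 0" and M: "cmod m < 1" and L: "LT w m (i,j,k) f = 0"
    and adj: "card (Z \<inter> {i,j,k}) \<ge> 2" and Z: "\<forall>x\<in>Z. f x = 0"
  shows "f i = 0 \<and> f j = 0 \<and> f k = 0"
proof (rule two_zero[OF A M L], rule ccontr)
  assume n: "\<not> ((f i = 0 \<and> f j = 0) \<or> (f j = 0 \<and> f k = 0) \<or> (f i = 0 \<and> f k = 0))"
  obtain x where x: "\<forall>y\<in>{i,j,k}. f y = 0 \<longrightarrow> y = x"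
  proof (cases "f i = 0")
    case True
    then show ?thesis using n that[of i] by auto
  next
    case False
    then show ?thesis
    proof (cases "f j = 0")
      case True
      then show ?thesis using n False that[of j] by auto
    next
      case False2: False
      then show ?thesis using False that[of k] by auto
    qed
  qed
  have "Z \<inter> {i,j,k} \<subseteq> {x}" using x Z by blast
  then have "card (Z \<inter> {i,j,k}) \<le> card {x}" by (intro card_mono) auto
  with adj show False by simp
qed

lemma propagate:
  fixes w :: "'n::finite \<Rightarrow> complex"
  assumes A: "\<forall>T\<in>F. tri_area w T > 0" and M: "\<forall>T\<in>F. cmod (mu T) < 1"
    and L: "\<forall>T\<in>F. LT w (mu T) T f = 0"
    and R: "(T, T') \<in> {(A, B). A \<in> F \<and> B \<in> F \<and> face_adj A B}\<^sup>*"
    and Z: "\<forall>x\<in>face_verts T. f x = 0"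
  shows "\<forall>x\<in>face_verts T'. f x = 0"
  using R
proof (induction rule: rtrancl_induct)
  case base
  then show ?case using Z by simp
next
  case (step B C)
  obtain i j k where C: "C = (i,j,k)" by (cases C) auto
  from step have CF: "C \<in> F" and ad: "face_adj B C" by auto
  have "card (face_verts B \<inter> {i,j,k}) \<ge> 2" using ad C by (simp add: face_adj_def face_verts_def)
  then have "f i = 0 \<and> f j = 0 \<and> f k = 0"
    using adj_zero[of w i j k "mu C" f "face_verts B"] A M L CF C step.IH by auto
  then show ?case using C by (simp add: face_verts_def)
qed

theorem theorem4p1:
  fixes w :: "'n::finite \<Rightarrow> complex"
    and F :: "'n face set"
    and mu :: "'n face \<Rightarrow> complex"
  assumes mesh: "planar_mesh w F"
    and beltrami: "\<forall>T\<in>F. cmod (mu T) < 1"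
  shows "\<exists>f0 :: 'n \<Rightarrow> complex.
           {f :: 'n \<Rightarrow> complex. E_QC w F mu (\<lambda>j. Re (f j)) (\<lambda>j. Im (f j)) = 0}
             = {(\<lambda>j. a * f0 j + b) | a b. True}"
proof -
  have A: "\<forall>T\<in>F. tri_area w T > 0" using mesh by (simp add: planar_mesh_def)
  have cov: "\<forall>x. \<exists>T\<in>F. x \<in> face_verts T" using mesh by (simp add: planar_mesh_def)
  have con: "\<forall>T\<in>F. \<forall>T'\<in>F. (T, T') \<in> {(A, B). A \<in> F \<and> B \<in> F \<and> face_adj A B}\<^sup>*"
    using mesh by (simp add: planar_mesh_def)
  let ?S = "\<lambda>f. \<forall>T\<in>F. LT w (mu T) T f = 0"
  have Siff: "\<And>f. E_QC w F mu (\<lambda>j. Re (f j)) (\<lambda>j. Im (f j)) = 0 \<longleftrightarrow> ?S f"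
    using E_zero[OF A beltrami] by blast
  obtain T0 where T0: "T0 \<in> F" using cov by blast
  obtain p q r where pqr: "T0 = (p,q,r)" by (cases T0) auto
  have inj0: "h = (\<lambda>_. 0)" if "?S h" "h p = 0" "h q = 0" for h
  proof
    fix x
    have "h r = 0" using two_zero[of w p q r "mu T0" h] A beltrami T0 that pqr by auto
    then have Z: "\<forall>y\<in>face_verts T0. h y = 0" using that pqr by (simp add: face_verts_def)
    obtain T where T: "T \<in> F" "x \<in> face_verts T" using cov by blast
    show "h x = 0" using propagate[OF A beltrami that(1) _ Z, of T] con T0 T by blast
  qed
  have lin: "?S (\<lambda>x. a * f x + b * g x + c)" if "?S f" "?S g" for f g a b c
    using that by (simp add: LT_lin)
  show ?thesis
  proof (cases "\<exists>g. ?S g \<and> g p \<noteq> g q")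
    case True
    then obtain g where g: "?S g" "g p \<noteq> g q" by blast
    define d where "d = g q - g p"
    have d: "d \<noteq> 0" using g d_def by simp
    define f0 where "f0 = (\<lambda>x. (1/d) * g x + 0 * g x + (- g p / d))"
    have f0: "?S f0" unfolding f0_def using lin[OF g(1) g(1)] .
    have f0p: "f0 p = 0" unfolding f0_def using d by (simp add: field_simps)
    have "f0 q = (g q - g p) / d" unfolding f0_def by (simp add: diff_divide_distrib)
    then have f0q: "f0 q = 1" using d by (simp add: d_def)
    show ?thesis
    proof (rule exI[of _ f0], intro set_eqI iffI)
      fix f assume "f \<in> {f. E_QC w F mu (\<lambda>j. Re (f j)) (\<lambda>j. Im (f j)) = 0}"
      then have Sf: "?S f" using Siff by simp
      define h where "h = (\<lambda>x. 1 * f x + (- (f q - f p)) * f0 x + (- f p))"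
      have "?S h" unfolding h_def using lin[OF Sf f0] .
      moreover have "h p = 0" "h q = 0" unfolding h_def using f0p f0q by simp_all
      ultimately have "h = (\<lambda>_. 0)" using inj0 by blast
      then have "f = (\<lambda>j. (f q - f p) * f0 j + f p)"
        unfolding h_def by (auto simp: fun_eq_iff algebra_simps dest: fun_cong)
      then show "f \<in> {(\<lambda>j. a * f0 j + b) | a b. True}" by blast
    next
      fix f assume "f \<in> {(\<lambda>j. a * f0 j + b) | a b. True}"
      then obtain a b where fe: "f = (\<lambda>j. a * f0 j + 0 * f0 j + b)" by auto
      have "?S f" unfolding fe using lin[OF f0 f0] .
      then show "f \<in> {f. E_QC w F mu (\<lambda>j. Re (f j)) (\<lambda>j. Im (f j)) = 0}" using Siff by simp
    qed
  next
    case False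
    define f0 where "f0 = (\<lambda>x::'n. 0::complex)"
    have f0: "?S f0" unfolding f0_def by (simp add: LT_const)
    show ?thesis
    proof (rule exI[of _ f0], intro set_eqI iffI)
      fix f assume "f \<in> {f. E_QC w F mu (\<lambda>j. Re (f j)) (\<lambda>j. Im (f j)) = 0}"
      then have Sf: "?S f" using Siff by simp
      then have fpq: "f p = f q" using False by blast
      define h where "h = (\<lambda>x. 1 * f x + 0 * f x + (- f p))"
      have "?S h" unfolding h_def using lin[OF Sf Sf] .
      moreover have "h p = 0" "h q = 0" unfolding h_def using fpq by simp_all
      ultimately have "h = (\<lambda>_. 0)" using inj0 by blast
      then have "f = (\<lambda>j. 0 * f0 j + f p)"
        unfolding h_def by (auto simp: fun_eq_iff dest: fun_cong)
      then show "f \<in> {(\<lambda>j. a * f0 j + b) | a b. True}" by blast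
    next
      fix f assume "f \<in> {(\<lambda>j. a * f0 j + b) | a b. True}"
      then obtain a b where fe: "f = (\<lambda>j. a * f0 j + b)" by auto
      have "f = (\<lambda>j. b)" unfolding fe f0_def by simp
      then have "?S f" by (simp add: LT_const)
      then show "f \<in> {f. E_QC w F mu (\<lambda>j. Re (f j)) (\<lambda>j. Im (f j)) = 0}" using Siff by simp
    qed
  qed
qed

end
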